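(* Let $\phi$ be a connected circuit all of whose constraints are strictly terraced. Then $[\![\phi]\!]$ is strictly terraced.
   Context: $e_i$ is the characteristic vector of $\{i\}$ and $\oplus$ is coordinatewise addition mod 2. A signature $F:\{0,1\}^J\to\mathbb{Q}_{\ge0}$ is strictly terraced if for all $x\in\{0,1\}^J$ and $i,j\in J$, $F(x)=0$ implies $F(x\oplus e_i)=F(x\oplus e_j)$. A circuit $\phi$ consists of: a finite set $J$ of incidences; a finite set $V$ of vertices with sets $J_v$ partitioning $J$; a set $A\subseteq J$ of external edges; a partition $E$ of $J\setminus A$ into pairs (internal edges); and constraints $F_v:\{0,1\}^{J_v}\to\mathbb{Q}_{\ge0}$. An assignment is $x\in\{0,1\}^J$ with $x_i=x_j$ for all $\{i,j\}\in E$; the signature is $[\![\phi]\!]:\{0,1\}^A\to\mathbb{Q}_{\ge0}$, $[\![\phi]\!](x)=\sum_{x'}\prod_vF_v(x'|_{J_v})$ over assignments $x'$ extending $x$. $\phi$ is connected if the multigraph on $V$ with an edge $uv$ for each $\{i,j\}\in E$, $i\in J_u$, $j\in J_v$, is connected. *)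

theory Defs
  imports Complex_Main
begin

text \<open>Boolean vectors x in {0,1}^S are represented as functions 'j => bool that are
  False (i.e. 0) outside S.  True stands for 1.\<close>

definition bvecs :: "'j set \<Rightarrow> ('j \<Rightarrow> bool) set" where
  "bvecs S = {x. \<forall>k. k \<notin> S \<longrightarrow> \<not> x k}"

definition restr :: "('j \<Rightarrow> bool) \<Rightarrow> 'j set \<Rightarrow> ('j \<Rightarrow> bool)" where
  "restr x S = (\<lambda>k. if k \<in> S then x k else False)"

definition flip :: "('j \<Rightarrow> bool) \<Rightarrow> 'j \<Rightarrow> ('j \<Rightarrow> bool)" where
  "flip x i = x(i := \<not> x i)"

definition is_signature :: "'j set \<Rightarrow> (('j \<Rightarrow> bool) \<Rightarrow> rat) \<Rightarrow> bool" where
  "is_signature S F \<longleftrightarrow> (\<forall>x \<in> bvecs S. F x \<ge> 0)"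

definition strictly_terraced :: "'j set \<Rightarrow> (('j \<Rightarrow> bool) \<Rightarrow> rat) \<Rightarrow> bool" where
  "strictly_terraced S F \<longleftrightarrow>
     (\<forall>x \<in> bvecs S. \<forall>i \<in> S. \<forall>j \<in> S. F x = 0 \<longrightarrow> F (flip x i) = F (flip x j))"

text \<open>A circuit: incidences J, vertices V, blocks Jv v (partitioning J), external
  edges A, internal edges E (a partition of J - A into pairs), constraints F v
  (a signature on Jv v).\<close>
definition circuit ::
  "'j set \<Rightarrow> 'v set \<Rightarrow> ('v \<Rightarrow> 'j set) \<Rightarrow> 'j set \<Rightarrow> 'j set set
     \<Rightarrow> ('v \<Rightarrow> ('j \<Rightarrow> bool) \<Rightarrow> rat) \<Rightarrow> bool" where
  "circuit J V Jv A E F \<longleftrightarrow>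
     finite J \<and> finite V \<and>
     (\<forall>v \<in> V. Jv v \<subseteq> J) \<and> (\<Union>v \<in> V. Jv v) = J \<and>
     (\<forall>u \<in> V. \<forall>v \<in> V. u \<noteq> v \<longrightarrow> Jv u \<inter> Jv v = {}) \<and>
     A \<subseteq> J \<and>
     (\<forall>e \<in> E. card e = 2) \<and> \<Union>E = J - A \<and>
     (\<forall>e \<in> E. \<forall>e' \<in> E. e \<noteq> e' \<longrightarrow> e \<inter> e' = {}) \<and>
     (\<forall>v \<in> V. is_signature (Jv v) (F v))"

definition assignments :: "'j set \<Rightarrow> 'j set set \<Rightarrow> ('j \<Rightarrow> bool) set" where
  "assignments J E = {x \<in> bvecs J. \<forall>e \<in> E. \<forall>i \<in> e. \<forall>j \<in> e. x i = x j}"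

definition circuit_sig ::
  "'j set \<Rightarrow> 'v set \<Rightarrow> ('v \<Rightarrow> 'j set) \<Rightarrow> 'j set \<Rightarrow> 'j set set
     \<Rightarrow> ('v \<Rightarrow> ('j \<Rightarrow> bool) \<Rightarrow> rat) \<Rightarrow> ('j \<Rightarrow> bool) \<Rightarrow> rat" where
  "circuit_sig J V Jv A E F x =
     (\<Sum>x' \<in> {x' \<in> assignments J E. \<forall>k \<in> A. x' k = x k}.
        \<Prod>v \<in> V. F v (restr x' (Jv v)))"

definition circuit_adj ::
  "'v set \<Rightarrow> ('v \<Rightarrow> 'j set) \<Rightarrow> 'j set set \<Rightarrow> ('v \<times> 'v) set" where
  "circuit_adj V Jv E = {(u, v). u \<in> V \<and> v \<in> V \<and>
     (\<exists>e \<in> E. \<exists>i \<in> e. \<exists>j \<in> e. i \<noteq> j \<and> i \<in> Jv u \<and> j \<in> Jv v)}"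

definition circuit_connected ::
  "'v set \<Rightarrow> ('v \<Rightarrow> 'j set) \<Rightarrow> 'j set set \<Rightarrow> bool" where
  "circuit_connected V Jv E \<longleftrightarrow> (\<forall>u \<in> V. \<forall>v \<in> V. (u, v) \<in> (circuit_adj V Jv E)\<^sup>*)"

end

theory Submission
  imports Defs
begin

lemma finite_bvecs: "finite J \<Longrightarrow> finite (bvecs J)"
proof -
  assume f: "finite J"
  have "bvecs J \<subseteq> (\<lambda>S k. k \<in> S) ` Pow J"
  proof
    fix x assume x: "x \<in> bvecs J"
    have "x = (\<lambda>k. k \<in> {k\<in>J. x k})" using x unfolding bvecs_def by auto
    then show "x \<in> (\<lambda>S k. k \<in> S) ` Pow J" by blast
  qed
  moreover have "finite ((\<lambda>S k. k \<in> S) ` Pow J)" using f by simp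
  ultimately show ?thesis by (rule finite_subset)
qed

lemma restr_flip_in: "k \<in> S \<Longrightarrow> restr (flip z k) S = flip (restr z S) k"
  unfolding restr_def flip_def by (rule ext) auto

lemma restr_flip_out: "k \<notin> S \<Longrightarrow> restr (flip z k) S = restr z S"
  unfolding restr_def flip_def by (rule ext) auto

lemma restr_bvecs: "restr z S \<in> bvecs S"
  unfolding restr_def bvecs_def by auto

lemma flip_flip_same: "flip (flip z k) k = z"
  unfolding flip_def by (rule ext) auto

lemma flip_comm: "flip (flip z k) k' = flip (flip z k') k"
  unfolding flip_def by (rule ext) auto

theorem lemma14:
  fixes J :: "'j set" and V :: "'v set" and Jv :: "'v \<Rightarrow> 'j set"
    and A :: "'j set" and E :: "'j set set" and F :: "'v \<Rightarrow> ('j \<Rightarrow> bool) \<Rightarrow> rat"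
  assumes "circuit J V Jv A E F"
    and "circuit_connected V Jv E"
    and "\<forall>v \<in> V. strictly_terraced (Jv v) (F v)"
  shows "strictly_terraced A (circuit_sig J V Jv A E F)"
  unfolding strictly_terraced_def
proof (intro ballI impI)
  have finJ: "finite J" and finV: "finite V" and JvJ: "\<forall>v\<in>V. Jv v \<subseteq> J"
    and UJ: "(\<Union>v\<in>V. Jv v) = J"
    and disj: "\<forall>u\<in>V. \<forall>v\<in>V. u \<noteq> v \<longrightarrow> Jv u \<inter> Jv v = {}"
    and AJ: "A \<subseteq> J" and card2: "\<forall>e\<in>E. card e = 2" and UE: "\<Union>E = J - A"
    and Edisj: "\<forall>e\<in>E. \<forall>e'\<in>E. e \<noteq> e' \<longrightarrow> e \<inter> e' = {}"
    and sig: "\<forall>v\<in>V. is_signature (Jv v) (F v)"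
    using assms(1) unfolding circuit_def by simp_all
  fix x i j assume xA: "x \<in> bvecs A" and iA: "i \<in> A" and jA: "j \<in> A"
    and G0: "circuit_sig J V Jv A E F x = 0"
  define Z where "Z = {z \<in> assignments J E. \<forall>k \<in> A. z k = x k}"
  define P where "P z = (\<Prod>v\<in>V. F v (restr z (Jv v)))" for z
  define H where "H k = (\<Sum>z\<in>Z. P (flip z k))" for k
  have finZ: "finite Z"
  proof (rule finite_subset)
    show "Z \<subseteq> bvecs J" unfolding Z_def assignments_def by auto
    show "finite (bvecs J)" using finite_bvecs finJ by blast
  qed
  have Pnn: "P z \<ge> 0" for z
    unfolding P_def
  proof (intro prod_nonneg)
    fix v assume "v \<in> V"
    then show "0 \<le> F v (restr z (Jv v))" using sig restr_bvecs unfolding is_signature_def by blast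
  qed
  have PZ: "P z = 0" if "z \<in> Z" for z
  proof -
    have "(\<Sum>z\<in>Z. P z) = 0" using G0 unfolding circuit_sig_def Z_def P_def by simp
    then show ?thesis using sum_nonneg_eq_0_iff[OF finZ] Pnn that by blast
  qed
  have vert: "P (flip z k) = P (flip z k')"
    if v: "v \<in> V" and k: "k \<in> Jv v" and k': "k' \<in> Jv v" and Pz: "P z = 0" for v k k' z
  proof -
    define Q where "Q = (\<Prod>u\<in>V-{v}. F u (restr z (Jv u)))"
    have fin: "finite V" using finV by blast
    have Qk: "(\<Prod>u\<in>V-{v}. F u (restr (flip z l) (Jv u))) = Q" if "l \<in> Jv v" for l
      unfolding Q_def
    proof (rule prod.cong[OF refl])
      fix u assume "u \<in> V - {v}"
      then have "l \<notin> Jv u" using disj v that by blast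
      then show "F u (restr (flip z l) (Jv u)) = F u (restr z (Jv u))"
        by (simp add: restr_flip_out)
    qed
    have Pl: "P (flip z l) = F v (flip (restr z (Jv v)) l) * Q" if "l \<in> Jv v" for l
      unfolding P_def using prod.remove[OF fin v, of "\<lambda>u. F u (restr (flip z l) (Jv u))"]
        Qk[OF that] restr_flip_in[OF that] by simp
    have "P z = F v (restr z (Jv v)) * Q"
      unfolding P_def Q_def using prod.remove[OF fin v] by simp
    then have "Q = 0 \<or> F v (restr z (Jv v)) = 0" using Pz by auto
    then show ?thesis
    proof
      assume "Q = 0" then show ?thesis using Pl[OF k] Pl[OF k'] by simp
    next
      assume "F v (restr z (Jv v)) = 0"
      then have "F v (flip (restr z (Jv v)) k) = F v (flip (restr z (Jv v)) k')"
        using assms(3) v k k' restr_bvecs unfolding strictly_terraced_def by blast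
      then show ?thesis using Pl[OF k] Pl[OF k'] by simp
    qed
  qed
  have vertH: "H k = H k'" if "v \<in> V" "k \<in> Jv v" "k' \<in> Jv v" for v k k'
    unfolding H_def using vert[OF that] PZ by (intro sum.cong) auto
  have edgeH: "H k = H k'" if e: "e \<in> E" and k: "k \<in> e" and k': "k' \<in> e" and ne: "k \<noteq> k'"
    for e k k'
  proof -
    have eq: "e = {k, k'}"
    proof -
      have "card e = 2" using card2 e by blast
      then obtain a b where "e = {a, b}" "a \<noteq> b" by (meson card_2_iff)
      then show ?thesis using k k' ne by auto
    qed
    have "k \<in> \<Union>E" "k' \<in> \<Union>E" using e k k' by blast+
    then have kJ: "k \<in> J - A" "k' \<in> J - A" unfolding UE by auto
    define g where "g z = flip (flip z k) k'" for z
    have gg: "g (g z) = z" for z unfolding g_def flip_def by (rule ext) auto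
    have gZ: "g z \<in> Z" if z: "z \<in> Z" for z
    proof -
      have zb: "z \<in> bvecs J" and ze: "\<forall>e\<in>E. \<forall>i\<in>e. \<forall>j\<in>e. z i = z j"
        and zA: "\<forall>l\<in>A. z l = x l" using z unfolding Z_def assignments_def by blast+
      have gv: "g z l = (if l = k \<or> l = k' then \<not> z l else z l)" for l
        unfolding g_def flip_def using ne by auto
      have "g z \<in> bvecs J" using zb kJ unfolding bvecs_def by (auto simp: gv)
      moreover have "\<forall>l\<in>A. g z l = x l" using zA kJ by (auto simp: gv)
      moreover have "\<forall>e'\<in>E. \<forall>a\<in>e'. \<forall>b\<in>e'. g z a = g z b"
      proof (intro ballI)
        fix e' a b assume e': "e' \<in> E" and a: "a \<in> e'" and b: "b \<in> e'"
        have zab: "z a = z b" using ze e' a b by blast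
        show "g z a = g z b"
        proof (cases "e' = e")
          case True
          then have "a \<in> {k,k'}" "b \<in> {k,k'}" using a b eq by auto
          then show ?thesis using zab by (auto simp: gv)
        next
          case False
          then have "e' \<inter> e = {}" using Edisj e e' by blast
          then have "a \<notin> {k,k'}" "b \<notin> {k,k'}" using a b eq by auto
          then show ?thesis using zab by (simp add: gv)
        qed
      qed
      ultimately show ?thesis unfolding Z_def assignments_def by blast
    qed
    have "H k = (\<Sum>z\<in>Z. P (flip (g z) k))"
      unfolding H_def
      apply (rule sum.reindex_bij_witness[of _ g g])
      using gg gZ by auto
    also have "\<dots> = H k'"
    proof -
      have "flip (g z) k = flip z k'" for z
        unfolding g_def flip_def using ne by (rule_tac ext) auto
      then show ?thesis unfolding H_def by simp
    qed
    finally show ?thesis .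
  qed
  have conn: "\<forall>k\<in>Jv u. \<forall>k'\<in>Jv v. H k = H k'"
    if "(u, v) \<in> (circuit_adj V Jv E)\<^sup>*" "u \<in> V" for u v
    using that(1)
  proof (induction rule: rtrancl_induct)
    case base
    then show ?case using vertH[OF that(2)] by blast
  next
    case (step w v)
    then obtain e a b where e: "e \<in> E" "a \<in> e" "b \<in> e" "a \<noteq> b" "a \<in> Jv w" "b \<in> Jv v"
      and wv: "w \<in> V" "v \<in> V"
      unfolding circuit_adj_def by blast
    show ?case
    proof (intro ballI)
      fix k k' assume k: "k \<in> Jv u" and k': "k' \<in> Jv v"
      have "H k = H a" using step.IH k e by blast
      also have "\<dots> = H b" using edgeH e by blast
      also have "\<dots> = H k'" using vertH[OF wv(2)] e k' by blast
      finally show "H k = H k'" .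
    qed
  qed
  have sigH: "circuit_sig J V Jv A E F (flip x l) = H l" if l: "l \<in> A" for l
  proof -
    have lJ: "l \<in> J" "l \<notin> \<Union>E" using AJ l unfolding UE by auto
    have mem: "flip z l \<in> {x' \<in> assignments J E. \<forall>k \<in> A. x' k = flip y l k}"
      if "z \<in> {x' \<in> assignments J E. \<forall>k \<in> A. x' k = y k}" for z y
    proof -
      have zb: "z \<in> bvecs J" and ze: "\<forall>e\<in>E. \<forall>i\<in>e. \<forall>j\<in>e. z i = z j"
        and zA: "\<forall>k\<in>A. z k = y k" using that unfolding assignments_def by blast+
      have "flip z l \<in> bvecs J" using zb lJ unfolding bvecs_def flip_def by auto
      moreover have "\<forall>k\<in>A. flip z l k = flip y l k" using zA unfolding flip_def by auto
      moreover have "\<forall>e\<in>E. \<forall>i\<in>e. \<forall>j\<in>e. flip z l i = flip z l j"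
      proof (intro ballI)
        fix e i j assume e: "e \<in> E" and ij: "i \<in> e" "j \<in> e"
        have "i \<noteq> l" "j \<noteq> l" using lJ e ij by blast+
        moreover have "z i = z j" using ze e ij by blast
        ultimately show "flip z l i = flip z l j" unfolding flip_def by simp
      qed
      ultimately show ?thesis unfolding assignments_def by blast
    qed
    have "circuit_sig J V Jv A E F (flip x l) = (\<Sum>z\<in>Z. P (flip z l))"
      unfolding circuit_sig_def P_def Z_def
      apply (rule sum.reindex_bij_witness[of _ "\<lambda>z. flip z l" "\<lambda>z. flip z l"])
      using mem[of _ x] mem[of _ "flip x l"] by (auto simp: flip_flip_same)
    then show ?thesis unfolding H_def by simp
  qed
  obtain u where u: "u \<in> V" "i \<in> Jv u" using UJ AJ iA by blast
  obtain v where v: "v \<in> V" "j \<in> Jv v" using UJ AJ jA by blast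
  have "H i = H j" using conn[of u v] assms(2) u v unfolding circuit_connected_def by blast
  then show "circuit_sig J V Jv A E F (flip x i) = circuit_sig J V Jv A E F (flip x j)"
    using sigH iA jA by simp
qed

end
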